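(* Let $n$ be a positive integer, and suppose there exists a hexagonal permutation $\pi$ with $n$ dots. Then $n$ is odd, and the dots of $\pi$ are contained in a Lee sphere of radius $(n-1)/2$.
   Context: Model the cells (hexagons) of the hexagonal grid by $\mathbb{Z}^2$, where cell $(x,y)$ is adjacent to the six cells $(x\pm1,y)$, $(x,y\pm1)$, $(x+1,y+1)$, $(x-1,y-1)$. The "rows" of the hexagonal grid in its three natural directions are the sets $\{y=c\}$, $\{x=c\}$ and $\{x-y=c\}$ for $c\in\mathbb{Z}$; two rows of the same direction are consecutive if their constants $c$ differ by $1$. A set of dots is a finite nonempty set of cells. A hexagonal permutation with $n$ dots is a set $\pi$ of $n$ cells such that, for each of the three directions, the rows of that direction containing a dot of $\pi$ are exactly $n$ consecutive rows, and each of these rows contains exactly one dot of $\pi$. The distance between two cells is the length of a shortest path of successively adjacent cells joining them; for cells $(x,y)$ and $(a,b)$ it equals $\max(|x-a|,|y-b|,|(x-a)-(y-b)|)$. A Lee sphere of radius $r$ with centre $(a,b)$ is the set of all cells at distance at most $r$ from $(a,b)$. *)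

theory Defs
  imports Main
begin

type_synonym cell = "int \<times> int"

definition row_y :: "cell \<Rightarrow> int" where "row_y p = snd p"
definition row_x :: "cell \<Rightarrow> int" where "row_x p = fst p"
definition row_d :: "cell \<Rightarrow> int" where "row_d p = fst p - snd p"

definition rows_ok :: "(cell \<Rightarrow> int) \<Rightarrow> cell set \<Rightarrow> nat \<Rightarrow> bool" where
  "rows_ok r P n \<longleftrightarrow>
     (\<exists>c. r ` P = {c .. c + int n - 1}) \<and>
     (\<forall>k \<in> r ` P. card {p \<in> P. r p = k} = 1)"

definition hex_perm :: "cell set \<Rightarrow> nat \<Rightarrow> bool" where
  "hex_perm P n \<longleftrightarrow> finite P \<and> card P = n \<and>
     rows_ok row_y P n \<and> rows_ok row_x P n \<and> rows_ok row_d P n"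

definition hex_dist :: "cell \<Rightarrow> cell \<Rightarrow> int" where
  "hex_dist p q = max \<bar>fst p - fst q\<bar> (max \<bar>snd p - snd q\<bar> \<bar>(fst p - fst q) - (snd p - snd q)\<bar>)"

definition lee_sphere :: "int \<Rightarrow> cell \<Rightarrow> cell set" where
  "lee_sphere r c = {p. hex_dist p c \<le> r}"

end

theory Submission
  imports Defs
begin

lemma rows_sum:
  assumes "finite P" "rows_ok r P n"
  shows "\<exists>c. r ` P = {c .. c + int n - 1} \<and> sum r P = int n * c + (\<Sum>i<n. int i)"
proof -
  obtain c where c: "r ` P = {c .. c + int n - 1}" and f: "\<forall>k \<in> r ` P. card {p \<in> P. r p = k} = 1"
    using assms(2) unfolding rows_ok_def by blast
  have inj: "inj_on r P"
  proof (rule inj_onI)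
    fix p q assume pq: "p \<in> P" "q \<in> P" "r p = r q"
    have "r p \<in> r ` P" using pq(1) by (rule imageI)
    with f have "card {p' \<in> P. r p' = r p} = 1" by (rule bspec)
    then obtain z where z: "{p' \<in> P. r p' = r p} = {z}" using card_1_singletonE by blast
    have "p \<in> {p' \<in> P. r p' = r p}" using pq(1) by simp
    then have zp: "p = z" using z by simp
    have "q \<in> {p' \<in> P. r p' = r p}" using pq(2,3) by simp
    then have "q = z" using z by simp
    then have "p \<in> {z}" "q \<in> {z}" using zp by simp_all
    then show "p = q" by simp
  qed
  have "sum r P = sum id (r ` P)" using sum.reindex[OF inj, of id] by simp
  also have "r ` P = (\<lambda>i. c + int i) ` {..<n}"
    unfolding c
  proof (rule set_eqI, rule iffI)
    fix k assume "k \<in> {c .. c + int n - 1}"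
    then have h: "c \<le> k" "k < c + int n" by simp_all
    then have "k = c + int (nat (k - c))" "nat (k - c) < n" by (simp, simp add: nat_less_iff)
    then show "k \<in> (\<lambda>i. c + int i) ` {..<n}" by blast
  next
    fix k assume "k \<in> (\<lambda>i. c + int i) ` {..<n}"
    then obtain i where "i < n" "k = c + int i" by blast
    then show "k \<in> {c .. c + int n - 1}" by simp
  qed
  also have "sum id ((\<lambda>i. c + int i) ` {..<n}) = (\<Sum>i<n. c + int i)"
    by (subst sum.reindex) (auto simp: inj_on_def)
  also have "\<dots> = int n * c + (\<Sum>i<n. int i)" by (simp add: sum.distrib)
  finally show ?thesis using c by blast
qed

lemma sum_int_lt: "2 * (\<Sum>i<n. int i) = int n * (int n - 1)"
  by (induction n) (auto simp: algebra_simps)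

theorem theorem1:
  fixes n :: nat and P :: "cell set"
  assumes "n > 0" and "hex_perm P n"
  shows "odd n \<and> (\<exists>c. P \<subseteq> lee_sphere ((int n - 1) div 2) c)"
proof -
  have fin: "finite P" and ry: "rows_ok row_y P n" and rx: "rows_ok row_x P n"
    and rd: "rows_ok row_d P n" using assms(2) unfolding hex_perm_def by auto
  define S where "S = (\<Sum>i<n. int i)"
  obtain a where a: "row_x ` P = {a .. a + int n - 1}" "sum row_x P = int n * a + S"
    using rows_sum[OF fin rx] S_def by blast
  obtain b where b: "row_y ` P = {b .. b + int n - 1}" "sum row_y P = int n * b + S"
    using rows_sum[OF fin ry] S_def by blast
  obtain d where d: "row_d ` P = {d .. d + int n - 1}" "sum row_d P = int n * d + S"
    using rows_sum[OF fin rd] S_def by blast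
  have "sum row_d P = sum row_x P - sum row_y P"
    unfolding row_d_def row_x_def row_y_def by (simp add: sum_subtractf)
  then have "int n * (a - b - d) = S" using a b d by (simp add: algebra_simps)
  then have "2 * int n * (a - b - d) = int n * (int n - 1)"
    using sum_int_lt[of n] S_def by (simp add: algebra_simps)
  then have m: "int n - 1 = 2 * (a - b - d)" using assms(1) by simp
  define m where "m = a - b - d"
  have odd: "odd n"
  proof
    assume "even n"
    then obtain k where "n = 2 * k" by blast
    then show False using m by (simp add: algebra_simps) presburger
  qed
  have md: "(int n - 1) div 2 = m" using m m_def by simp
  have "P \<subseteq> lee_sphere m (a + m, b + m)"
  proof
    fix p assume p: "p \<in> P"
    have "row_x p \<in> {a .. a + int n - 1}" "row_y p \<in> {b .. b + int n - 1}"
      "row_d p \<in> {d .. d + int n - 1}" using a b d p by blast+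
    then have h: "a \<le> fst p" "fst p \<le> a + 2*m" "b \<le> snd p" "snd p \<le> b + 2*m"
      "d \<le> fst p - snd p" "fst p - snd p \<le> d + 2*m"
      unfolding row_x_def row_y_def row_d_def using m m_def by auto
    have "hex_dist p (a + m, b + m) \<le> m"
      unfolding hex_dist_def fst_conv snd_conv using h m_def by (simp add: abs_le_iff)
    then show "p \<in> lee_sphere m (a + m, b + m)" unfolding lee_sphere_def by simp
  qed
  then show ?thesis using odd md by blast
qed

end
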